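(* Let $0<\epsilon\le\frac12$, $0<c'\le c$, and let $k\ge 2$ be an integer. Let $f$ be a real-valued function on the integers $m\ge k$ such that for every integer $n\ge 0$: (i) if $n\le 4k$, then $f(n+k)\le c'(n+k)$; (ii) if $n>4k$, then there exist integers $n_1,n_2$ with $n_1+n_2=n$ and $\frac12 n\le n_1\le (1-\epsilon)n$ such that $f(n+k)\le f(n_1+k)+f(n_2+k)+c(n+k)$. Then for every integer $n\ge 2k$, $$f(n+k)\le \frac{c}{\epsilon}\, n\ln n - ck .$$
   Context: $\ln$ denotes the natural logarithm. *)

theory Defs
  imports Complex_Main
begin

end

theory Submission
  imports Defs
begin

lemma xlnx:
  fixes a b :: real
  assumes "0 < a" "a \<le> b"
  shows "a * ln a \<le> a * ln b - a * (b - a) / b"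
proof -
  have b: "b > 0" using assms by simp
  have "ln (a/b) \<le> a/b - 1" using assms b by (intro ln_le_minus_one) simp
  hence "ln a - ln b \<le> a/b - 1" using assms b by (simp add: ln_divide_pos)
  also have "a/b - 1 = - ((b - a)/b)" using b by (simp add: field_simps)
  finally have "ln a \<le> ln b - (b-a)/b" by simp
  hence "a * ln a \<le> a * (ln b - (b-a)/b)" using assms(1) by (intro mult_left_mono) auto
  thus ?thesis by (simp add: algebra_simps)
qed

lemma split_bound:
  fixes a b n :: real
  assumes "0 < a" "0 < b" "a + b = n" "n/2 \<le> a"
  shows "a * ln a + b * ln b \<le> n * ln n - b"
proof -
  have n: "n > 0" using assms by simp
  have "n - a = b" "n - b = a" using assms by auto
  have 1: "a * ln a \<le> a * ln n - a * b / n" using xlnx[of a n] assms \<open>n - a = b\<close> by simp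
  have 2: "b * ln b \<le> b * ln n - b * a / n" using xlnx[of b n] assms \<open>n - b = a\<close> by (simp add: mult.commute)
  have "2 * (a * b / n) \<ge> b"
  proof -
    have "b * n \<le> 2 * a * b" using assms by (simp add: mult_left_mono algebra_simps)
    thus ?thesis using n by (simp add: field_simps)
  qed
  moreover have "a * ln n + b * ln n = n * ln n" using assms(3) by (metis distrib_right)
  moreover have "b * a / n = a * b / n" by (simp add: mult.commute)
  ultimately show ?thesis using 1 2 by linarith
qed

theorem lemma3:
  fixes \<epsilon> c c' :: real and k :: int and f :: "int \<Rightarrow> real"
  assumes eps_pos: "0 < \<epsilon>" and eps_le: "\<epsilon> \<le> 1/2"
    and c'_pos: "0 < c'" and c'_le: "c' \<le> c"
    and k_ge: "k \<ge> 2"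
    and base: "\<And>n::int. 0 \<le> n \<Longrightarrow> n \<le> 4 * k \<Longrightarrow> f (n + k) \<le> c' * of_int (n + k)"
    and step: "\<And>n::int. 0 \<le> n \<Longrightarrow> n > 4 * k \<Longrightarrow>
       \<exists>n1 n2 :: int. n1 + n2 = n \<and> real_of_int n / 2 \<le> real_of_int n1 \<and> of_int n1 \<le> (1 - \<epsilon>) * of_int n \<and>
         f (n + k) \<le> f (n1 + k) + f (n2 + k) + c * of_int (n + k)"
  shows "\<And>n::int. n \<ge> 2 * k \<Longrightarrow> f (n + k) \<le> c / \<epsilon> * of_int n * ln (of_int n) - c * of_int k"
proof -
  fix n :: int
  assume "n \<ge> 2 * k"
  have cpos: "c > 0" using c'_pos c'_le by simp
  have ie: "1 / \<epsilon> \<ge> 2" using eps_pos eps_le by (simp add: field_simps)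
  have cie: "c / \<epsilon> \<ge> 2 * c" using ie cpos
    by (metis divide_inverse inverse_eq_divide mult.commute mult_right_mono less_imp_le)
  have baseR: "f (m + k) \<le> c * of_int (m + k)" if "0 \<le> m" "m \<le> 4 * k" for m
  proof -
    have "f (m + k) \<le> c' * of_int (m + k)" using base that by simp
    also have "\<dots> \<le> c * of_int (m + k)" using c'_le that k_ge by (intro mult_right_mono) auto
    finally show ?thesis .
  qed
  show "f (n + k) \<le> c / \<epsilon> * of_int n * ln (of_int n) - c * of_int k"
    using \<open>n \<ge> 2 * k\<close>
  proof (induction "nat n" arbitrary: n rule: less_induct)
    case less
    define N where "N = real_of_int n"
    define K where "K = real_of_int k"
    have K2: "K \<ge> 2" using k_ge K_def by simp
    have NK: "N \<ge> 2 * K" using less.prems N_def K_def by simp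
    have N4: "N \<ge> 4" using NK K2 by simp
    have lnN: "ln N \<ge> 1"
    proof -
      have "exp 1 \<le> (4::real)" using exp_le by simp
      hence "exp 1 \<le> N" using N4 by simp
      hence "ln (exp 1) \<le> ln N" using N4 by (subst ln_le_cancel_iff) auto
      thus ?thesis by simp
    qed
    show ?case
    proof (cases "n \<le> 4 * k")
      case True
      have "f (n + k) \<le> c * (N + K)" using baseR[of n] True less.prems k_ge N_def K_def by simp
      also have "\<dots> \<le> 2 * c * N - c * K" using NK cpos
        by (simp add: algebra_simps mult_left_mono)
      also have "2 * c * N \<le> c / \<epsilon> * N * ln N"
      proof -
        have "2 * c * N \<le> c / \<epsilon> * N" using cie N4 by (intro mult_right_mono) auto
        also have "\<dots> \<le> c / \<epsilon> * N * ln N"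
        proof -
          have "0 \<le> c / \<epsilon> * N" using cpos eps_pos N4 by simp
          from mult_left_mono[OF lnN this] show ?thesis by simp
        qed
        finally show ?thesis .
      qed
      finally show ?thesis unfolding N_def K_def by simp
    next
      case False
      hence ng: "n > 4 * k" by simp
      obtain n1 n2 where h: "n1 + n2 = n" "real_of_int n / 2 \<le> real_of_int n1"
        "of_int n1 \<le> (1 - \<epsilon>) * of_int n"
        "f (n + k) \<le> f (n1 + k) + f (n2 + k) + c * of_int (n + k)"
        using step[of n] ng k_ge by auto
      define N1 where "N1 = real_of_int n1"
      define N2 where "N2 = real_of_int n2"
      have sum: "N1 + N2 = N" using h(1) N1_def N2_def N_def by (metis of_int_add)
      have N1h: "N / 2 \<le> N1" using h(2) N1_def N_def by simp
      have N1u: "N1 \<le> (1 - \<epsilon>) * N" using h(3) N1_def N_def by simp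
      have N2e: "N2 \<ge> \<epsilon> * N" using sum N1u by (simp add: algebra_simps)
      have N2pos: "N2 > 0" using N2e eps_pos N4
        by (smt (verit) mult_pos_pos)
      have n1k: "n1 \<ge> 2 * k" using N1h NK ng N1_def N_def K_def by linarith
      have n1lt: "n1 < n" using h(1) N2pos N2_def by simp
      have IH1: "f (n1 + k) \<le> c / \<epsilon> * N1 * ln N1 - c * K"
        using less.hyps[of n1] n1k n1lt k_ge N1_def K_def by simp
      have N1pos: "N1 > 0" using N1h N4 by simp
      have sb: "N1 * ln N1 + N2 * ln N2 \<le> N * ln N - N2"
        using split_bound[OF N1pos N2pos sum N1h] .
      have sb1: "N1 * ln N1 \<le> N * ln N - N2 * ln N"
      proof -
        have "N1 * ln N1 \<le> N1 * ln N - N1 * (N - N1) / N" using xlnx[of N1 N] N1pos sum N2pos by simp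
        also have "\<dots> \<le> N1 * ln N" using N1pos sum N2pos N4 by simp
        moreover have "N1 * ln N + N2 * ln N = N * ln N" using sum by (metis distrib_right)
        ultimately show ?thesis by linarith
      qed
      show ?thesis
      proof (cases "n2 \<ge> 2 * k")
        case True
        have n2lt: "n2 < n" using h(1) N1pos N1_def by simp
        have IH2: "f (n2 + k) \<le> c / \<epsilon> * N2 * ln N2 - c * K"
          using less.hyps[of n2] True n2lt k_ge N2_def K_def by simp
        have "f (n + k) \<le> c / \<epsilon> * (N1 * ln N1 + N2 * ln N2) - 2 * c * K + c * (N + K)"
          using h(4) IH1 IH2 N_def K_def by (simp add: algebra_simps)
        also have "\<dots> \<le> c / \<epsilon> * (N * ln N - \<epsilon> * N) - 2 * c * K + c * (N + K)"
          using sb N2e cpos eps_pos by (intro add_right_mono diff_right_mono mult_left_mono) auto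
        also have "\<dots> = c / \<epsilon> * N * ln N - c * K" using eps_pos by (simp add: field_simps)
        finally show ?thesis unfolding N_def K_def by simp
      next
        case False
        have f2: "f (n2 + k) \<le> c * (N2 + K)" using baseR[of n2] False N2pos N2_def K_def k_ge by simp
        have A: "c / \<epsilon> * (N1 * ln N1) \<le> c / \<epsilon> * (N * ln N - N2 * ln N)"
          using sb1 cpos eps_pos by (intro mult_left_mono) auto
        have B: "c / \<epsilon> * (N2 * ln N) \<ge> c * N * ln N"
        proof -
          have "c / \<epsilon> * N2 \<ge> c / \<epsilon> * (\<epsilon> * N)" using N2e cpos eps_pos by (intro mult_left_mono) auto
          hence "c / \<epsilon> * N2 \<ge> c * N" using eps_pos by simp
          hence "c / \<epsilon> * N2 * ln N \<ge> c * N * ln N" using lnN by (intro mult_right_mono) auto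
          thus ?thesis by (simp add: algebra_simps)
        qed
        have lnN2: "ln N \<ge> 2"
        proof -
          have "N \<ge> 9" using ng k_ge N_def by simp
          have "exp 2 \<le> (9::real)"
          proof -
            have "exp (1::real) \<le> 3" using exp_le by simp
            hence "exp 1 * exp 1 \<le> (3::real) * 3" by (intro mult_mono) auto
            thus ?thesis by (simp add: mult_exp_exp)
          qed
          hence "exp 2 \<le> N" using \<open>N \<ge> 9\<close> by simp
          hence "ln (exp 2) \<le> ln N" using N4 by (subst ln_le_cancel_iff) auto
          thus ?thesis by simp
        qed
        have C: "c * N * ln N \<ge> c * (2 * N)" using lnN2 cpos N4
          by (simp add: mult_left_mono)
        have D: "N2 + 2 * K \<le> N"
        proof -
          have "4 * K < N" using ng N_def K_def by simp
          thus ?thesis using N1h sum by linarith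
        qed
        have "f (n + k) \<le> c / \<epsilon> * (N1 * ln N1) - c * K + c * (N2 + K) + c * (N + K)"
          using h(4) IH1 f2 N_def K_def by (simp add: algebra_simps)
        also have "\<dots> \<le> c / \<epsilon> * N * ln N - c * K"
        proof -
          have D': "c * (N2 + 2 * K) \<le> c * N" using D cpos by (simp add: mult_left_mono)
          have A': "c / \<epsilon> * (N1 * ln N1) \<le> c / \<epsilon> * (N * ln N) - c / \<epsilon> * (N2 * ln N)"
            using A by (simp add: right_diff_distrib)
          have e1: "c / \<epsilon> * N * ln N = c / \<epsilon> * (N * ln N)" by simp
          have e2: "c * (N2 + 2 * K) = c * N2 + 2 * (c * K)" by (simp add: algebra_simps)
          have e3: "c * (N2 + K) + c * (N + K) = c * N2 + c * N + 2 * (c * K)" by (simp add: algebra_simps)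
          have e4: "c * N * ln N \<ge> 2 * (c * N)" using C by (simp add: algebra_simps)
          show ?thesis using A' B e1 e2 e3 e4 D' by (smt (verit))
        qed
        finally show ?thesis unfolding N_def K_def by simp
      qed
    qed
  qed
qed

end
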